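(* Let $a_1,\dots,a_n$ be positive integers, $P=\mathbf{a_1}\oplus\cdots\oplus\mathbf{a_n}$ with top antichain summand $A_n$, and $I\in\mathcal{IC}(P)$. Then \[\mathrm{Row}(I)=\begin{cases}P-I & \text{if } I=\emptyset,\ A_n\subseteq I,\text{ or } I\subseteq A_n,\\ \Delta(\lceil I\rceil)-\Delta(\mathrm{Min}(I)) & \text{otherwise.}\end{cases}\]
   Context: For posets $P,Q$, the ordinal sum $P\oplus Q$ has underlying set the disjoint union of $P$ and $Q$, with $x\le y$ iff $x\le_P y$, or $x\le_Q y$, or $x\in P$ and $y\in Q$. $\mathbf{a}$ denotes an antichain with $a$ elements; in $\mathbf{a_1}\oplus\cdots\oplus\mathbf{a_n}$, $A_i$ is the $i$-th summand, $A_1$ at the bottom. All posets are finite. A subset $I\subseteq P$ is interval-closed if for all $x,y\in I$ and $z\in P$ with $x\le z\le y$ we have $z\in I$; $\mathcal{IC}(P)$ is the set of interval-closed subsets of $P$. For $x\in P$ the toggle $t_x:\mathcal{IC}(P)\to\mathcal{IC}(P)$ is defined by $t_x(I)=I\triangle\{x\}$ if $I\triangle\{x\}\in\mathcal{IC}(P)$ and $t_x(I)=I$ otherwise. Rowmotion is $\mathrm{Row}=t_{x_1}\circ t_{x_2}\circ\cdots\circ t_{x_N}$, where $(x_1,\dots,x_N)$ is a linear extension of $P$ (toggling from the top down). For $S\subseteq P$, $\Delta(S)$ is the smallest order ideal containing $S$ and $\nabla(S)$ the smallest order filter containing $S$; $\mathrm{Min}(S)$ is the set of minimal elements of $S$;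 the ceiling $\lceil I\rceil$ is the set of minimal elements of $\nabla(I)-I$. *)

theory Defs
  imports Main
begin

definition interval_closed :: "'a set \<Rightarrow> ('a \<Rightarrow> 'a \<Rightarrow> bool) \<Rightarrow> 'a set \<Rightarrow> bool" where
  "interval_closed P le I \<longleftrightarrow> I \<subseteq> P \<and>
     (\<forall>x\<in>I. \<forall>y\<in>I. \<forall>z\<in>P. le x z \<and> le z y \<longrightarrow> z \<in> I)"

definition toggle :: "'a set \<Rightarrow> ('a \<Rightarrow> 'a \<Rightarrow> bool) \<Rightarrow> 'a \<Rightarrow> 'a set \<Rightarrow> 'a set" where
  "toggle P le x I =
     (let J = (I - {x}) \<union> ({x} - I) in if interval_closed P le J then J else I)"

definition linear_extension :: "'a set \<Rightarrow> ('a \<Rightarrow> 'a \<Rightarrow> bool) \<Rightarrow> 'a list \<Rightarrow> bool" where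
  "linear_extension P le xs \<longleftrightarrow> distinct xs \<and> set xs = P \<and>
     (\<forall>i<length xs. \<forall>j<length xs. le (xs ! i) (xs ! j) \<longrightarrow> i \<le> j)"

text \<open>Row = t_{x_1} o t_{x_2} o ... o t_{x_N} (so t_{x_N} is applied first).\<close>
definition rowmotion :: "'a set \<Rightarrow> ('a \<Rightarrow> 'a \<Rightarrow> bool) \<Rightarrow> 'a list \<Rightarrow> 'a set \<Rightarrow> 'a set" where
  "rowmotion P le xs I = foldr (toggle P le) xs I"

definition down_closure :: "'a set \<Rightarrow> ('a \<Rightarrow> 'a \<Rightarrow> bool) \<Rightarrow> 'a set \<Rightarrow> 'a set" where
  "down_closure P le S = {y\<in>P. \<exists>x\<in>S. le y x}"

definition up_closure :: "'a set \<Rightarrow> ('a \<Rightarrow> 'a \<Rightarrow> bool) \<Rightarrow> 'a set \<Rightarrow> 'a set" where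
  "up_closure P le S = {y\<in>P. \<exists>x\<in>S. le x y}"

definition minimal_elts :: "('a \<Rightarrow> 'a \<Rightarrow> bool) \<Rightarrow> 'a set \<Rightarrow> 'a set" where
  "minimal_elts le S = {x\<in>S. \<forall>y\<in>S. le y x \<longrightarrow> y = x}"

definition ceiling_ic :: "'a set \<Rightarrow> ('a \<Rightarrow> 'a \<Rightarrow> bool) \<Rightarrow> 'a set \<Rightarrow> 'a set" where
  "ceiling_ic P le I = minimal_elts le (up_closure P le I - I)"

text \<open>Ordinal sum of antichains a_1 + ... + a_n, 0-indexed: element (i,j) is the
  j-th element of summand A_{i+1}, for i < n and j < a i.\<close>
definition osum_carrier :: "(nat \<Rightarrow> nat) \<Rightarrow> nat \<Rightarrow> (nat \<times> nat) set" where
  "osum_carrier a n = {(i, j). i < n \<and> j < a i}"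

definition osum_le :: "nat \<times> nat \<Rightarrow> nat \<times> nat \<Rightarrow> bool" where
  "osum_le x y \<longleftrightarrow> x = y \<or> fst x < fst y"

definition osum_top :: "(nat \<Rightarrow> nat) \<Rightarrow> nat \<Rightarrow> (nat \<times> nat) set" where
  "osum_top a n = {(i, j). i = n - 1 \<and> j < a (n - 1)}"

end

theory Submission
  imports Defs
begin



lemma ic_char:
  "interval_closed P osum_le S \<longleftrightarrow> S \<subseteq> P \<and>
     (\<forall>x\<in>S. \<forall>y\<in>S. \<forall>z\<in>P. fst x < fst z \<and> fst z < fst y \<longrightarrow> z \<in> S)"
  unfolding interval_closed_def osum_le_def by auto

lemma toggle_pres: "interval_closed P le J \<Longrightarrow> interval_closed P le (toggle P le x J)"
  by (simp add: toggle_def Let_def)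

lemma foldr_pres: "interval_closed P le I \<Longrightarrow> interval_closed P le (foldr (toggle P le) ys I)"
  by (induction ys) (auto intro: toggle_pres)

lemma foldr_char:
  assumes IC: "interval_closed P le I"
   and H: "\<And>us x vs. ys = us @ x # vs \<Longrightarrow> interval_closed P le (R \<inter> set vs \<union> (I - set vs)) \<Longrightarrow>
       toggle P le x (R \<inter> set vs \<union> (I - set vs)) = R \<inter> set (x#vs) \<union> (I - set (x#vs))"
  shows "foldr (toggle P le) ys I = R \<inter> set ys \<union> (I - set ys)"
  using H
proof (induction ys)
  case Nil show ?case by simp
next
  case (Cons y ys)
  have IH: "foldr (toggle P le) ys I = R \<inter> set ys \<union> (I - set ys)"
  proof (rule Cons.IH)
    fix us x vs assume "ys = us @ x # vs" "interval_closed P le (R \<inter> set vs \<union> (I - set vs))"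
    then show "toggle P le x (R \<inter> set vs \<union> (I - set vs)) = R \<inter> set (x#vs) \<union> (I - set (x#vs))"
      using Cons.prems[of "y#us" x vs] by simp
  qed
  have "interval_closed P le (R \<inter> set ys \<union> (I - set ys))"
    using foldr_pres[OF IC, of ys] IH by simp
  then show ?case using IH Cons.prems[of "[]" y ys] by simp
qed

lemma toggle_eq:
  assumes xU: "x \<notin> U"
   and A: "x \<notin> I \<Longrightarrow> interval_closed P le (insert x (R \<inter> U \<union> (I - U))) \<longleftrightarrow> x \<in> R"
   and B: "x \<in> I \<Longrightarrow> interval_closed P le ((R \<inter> U \<union> (I - U)) - {x}) \<longleftrightarrow> x \<notin> R"
  shows "toggle P le x (R \<inter> U \<union> (I - U)) = R \<inter> insert x U \<union> (I - insert x U)"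
proof (cases "x \<in> I")
  case True
  have e: "(R \<inter> U \<union> (I - U)) - {x} \<union> ({x} - (R \<inter> U \<union> (I - U))) = (R \<inter> U \<union> (I - U)) - {x}"
    using True xU by auto
  show ?thesis using B[OF True] True xU unfolding toggle_def Let_def e by auto
next
  case False
  have e: "(R \<inter> U \<union> (I - U)) - {x} \<union> ({x} - (R \<inter> U \<union> (I - U))) = insert x (R \<inter> U \<union> (I - U))"
    using False xU by auto
  show ?thesis using A[OF False] False xU unfolding toggle_def Let_def e by auto
qed

locale step =
  fixes a :: "nat \<Rightarrow> nat" and n :: nat and I R U :: "(nat\<times>nat) set" and x :: "nat\<times>nat"
  assumes xP: "x \<in> osum_carrier a n" and xU: "x \<notin> U" and UP: "U \<subseteq> osum_carrier a n"
   and Uabove: "\<forall>y\<in>osum_carrier a n. fst x < fst y \<longrightarrow> y \<in> U"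
   and Ubelow: "\<forall>y\<in>U. fst x \<le> fst y"
   and ICJ: "interval_closed (osum_carrier a n) osum_le (R \<inter> U \<union> (I - U))"
   and IP: "I \<subseteq> osum_carrier a n" and RP: "R \<subseteq> osum_carrier a n"
begin

abbreviation "P \<equiv> osum_carrier a n"
abbreviation "J \<equiv> R \<inter> U \<union> (I - U)"

lemma Jhi: "z \<in> P \<Longrightarrow> fst x < fst z \<Longrightarrow> z \<in> J \<longleftrightarrow> z \<in> R"
  using Uabove by auto

lemma Jlo: "fst z < fst x \<Longrightarrow> z \<in> J \<longleftrightarrow> z \<in> I"
  using Ubelow by fastforce

lemma JP: "J \<subseteq> P" using IP RP by auto

lemma ins_ok:
  assumes "\<forall>b\<in>J. \<forall>z\<in>P. fst x < fst z \<and> fst z < fst b \<longrightarrow> z \<in> J"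
    and "\<forall>b\<in>J. \<forall>z\<in>P. fst b < fst z \<and> fst z < fst x \<longrightarrow> z \<in> J"
  shows "interval_closed P osum_le (insert x J)"
  unfolding ic_char
proof (intro conjI ballI impI)
  show "insert x J \<subseteq> P" using JP xP by auto
  fix c b z assume c: "c \<in> insert x J" and b: "b \<in> insert x J" and z: "z \<in> P"
    and bt: "fst c < fst z \<and> fst z < fst b"
  show "z \<in> insert x J"
  proof (cases "c = x")
    case True
    then show ?thesis using b z bt assms(1) by auto
  next
    case cx: False
    show ?thesis
    proof (cases "b = x")
      case True
      then show ?thesis using c cx z bt assms(2) by auto
    next
      case False
      then have "c \<in> J" "b \<in> J" using c b cx by auto
      then have "z \<in> J" using ICJ z bt unfolding ic_char by blast
      then show ?thesis by simp
    qed
  qed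
qed

lemma ins_bad:
  assumes "b \<in> J" "z \<in> P" "z \<notin> J"
    and "(fst x < fst z \<and> fst z < fst b) \<or> (fst b < fst z \<and> fst z < fst x)"
  shows "\<not> interval_closed P osum_le (insert x J)"
proof -
  have "z \<noteq> x" using assms(4) by auto
  show ?thesis
  proof
    assume "interval_closed P osum_le (insert x J)"
    then have "\<forall>c\<in>insert x J. \<forall>d\<in>insert x J. \<forall>w\<in>P. fst c < fst w \<and> fst w < fst d \<longrightarrow> w \<in> insert x J"
      unfolding ic_char by blast
    then have "z \<in> insert x J" using assms by blast
    then show False using assms \<open>z \<noteq> x\<close> by simp
  qed
qed

lemma rem: "interval_closed P osum_le (J - {x}) \<longleftrightarrow> \<not>(\<exists>c\<in>J. \<exists>b\<in>J. fst c < fst x \<and> fst x < fst b)"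
proof
  assume h: "interval_closed P osum_le (J - {x})"
  show "\<not>(\<exists>c\<in>J. \<exists>b\<in>J. fst c < fst x \<and> fst x < fst b)"
  proof
    assume "\<exists>c\<in>J. \<exists>b\<in>J. fst c < fst x \<and> fst x < fst b"
    then obtain c b where "c \<in> J" "b \<in> J" "fst c < fst x" "fst x < fst b" by blast
    then have "c \<in> J - {x}" "b \<in> J - {x}" by auto
    with h xP \<open>fst c < fst x\<close> \<open>fst x < fst b\<close> have "x \<in> J - {x}" unfolding ic_char by (meson \<open>b \<in> J - {x}\<close> \<open>c \<in> J - {x}\<close>)
    then show False by simp
  qed
next
  assume h: "\<not>(\<exists>c\<in>J. \<exists>b\<in>J. fst c < fst x \<and> fst x < fst b)"
  show "interval_closed P osum_le (J - {x})"
    unfolding ic_char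
  proof (intro conjI ballI impI)
    show "J - {x} \<subseteq> P" using JP by auto
    fix c b z assume "c \<in> J - {x}" "b \<in> J - {x}" "z \<in> P" "fst c < fst z \<and> fst z < fst b"
    moreover then have "z \<in> J" using ICJ unfolding ic_char by (metis DiffD1)
    ultimately show "z \<in> J - {x}" using h by auto
  qed
qed

end



context step begin

lemma up_case:
  assumes up: "\<forall>y\<in>I. \<forall>z\<in>P. fst y < fst z \<longrightarrow> z \<in> I" and Rd: "R = P - I"
  shows "(x \<notin> I \<longrightarrow> (interval_closed P osum_le (insert x J) \<longleftrightarrow> x \<in> R)) \<and>
         (x \<in> I \<longrightarrow> (interval_closed P osum_le (J - {x}) \<longleftrightarrow> x \<notin> R))"
proof (intro conjI impI)
  assume xI: "x \<notin> I"
  have "interval_closed P osum_le (insert x J)"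
  proof (rule ins_ok; intro ballI impI)
    fix b z assume b: "b \<in> J" and z: "z \<in> P" and bt: "fst x < fst z \<and> fst z < fst b"
    have bP: "b \<in> P" using b JP by auto
    have "b \<in> R" using Jhi[OF bP] b bt by auto
    then have "b \<notin> I" using Rd by auto
    then have "z \<notin> I" using up z bt bP by auto
    then show "z \<in> J" using Jhi[OF z] bt Rd z by auto
  next
    fix b z assume b: "b \<in> J" and z: "z \<in> P" and bt: "fst b < fst z \<and> fst z < fst x"
    have "b \<in> I" using Jlo[of b] b bt by auto
    then have "z \<in> I" using up z bt by auto
    then show "z \<in> J" using Jlo[of z] bt by auto
  qed
  then show "interval_closed P osum_le (insert x J) \<longleftrightarrow> x \<in> R" using xI xP Rd by auto
next
  assume xI: "x \<in> I"
  have "\<not>(\<exists>c\<in>J. \<exists>b\<in>J. fst c < fst x \<and> fst x < fst b)"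
  proof
    assume "\<exists>c\<in>J. \<exists>b\<in>J. fst c < fst x \<and> fst x < fst b"
    then obtain b where b: "b \<in> J" "fst x < fst b" by blast
    have bP: "b \<in> P" using b JP by auto
    have "b \<in> R" using Jhi[OF bP] b by auto
    moreover have "b \<in> I" using up xI bP b by auto
    ultimately show False using Rd by auto
  qed
  then show "interval_closed P osum_le (J - {x}) \<longleftrightarrow> x \<notin> R" using rem xI Rd by auto
qed

lemma caseB:
  assumes Ilev: "\<forall>y\<in>I. lo \<le> fst y \<and> fst y \<le> hi"
    and y0: "y0 \<in> I" "fst y0 = lo"
    and mid: "\<forall>z\<in>P. lo < fst z \<and> fst z < hi \<longrightarrow> z \<in> I"
    and zB: "zB \<in> P" "fst zB = hi" "zB \<notin> I"
    and lohi: "lo < hi" and hin: "hi < n" and apos: "\<forall>i<n. 0 < a i"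
    and Rd: "R = {z\<in>P. lo \<le> fst z \<and> fst z \<le> hi \<and> (z \<in> I \<longrightarrow> lo < fst z \<and> fst z < hi)}"
  shows "(x \<notin> I \<longrightarrow> (interval_closed P osum_le (insert x J) \<longleftrightarrow> x \<in> R)) \<and>
         (x \<in> I \<longrightarrow> (interval_closed P osum_le (J - {x}) \<longleftrightarrow> x \<notin> R))"
proof (intro conjI impI)
  assume xI: "x \<notin> I"
  consider "hi < fst x" | "fst x = hi" | "lo < fst x \<and> fst x < hi" | "fst x = lo" | "fst x < lo"
    by linarith
  then show "interval_closed P osum_le (insert x J) \<longleftrightarrow> x \<in> R"
  proof cases
    case 1
    have "x \<notin> R" using 1 Rd by auto
    moreover have "\<not> interval_closed P osum_le (insert x J)"
    proof (rule ins_bad[of y0 zB])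
      show "y0 \<in> J" using Jlo[of y0] y0 1 lohi by auto
      show "zB \<notin> J" using Jlo[of zB] zB 1 by auto
    qed (use zB y0 1 lohi in auto)
    ultimately show ?thesis by simp
  next
    case 2
    have "x \<in> R" using 2 Rd xI xP lohi by auto
    moreover have "interval_closed P osum_le (insert x J)"
    proof (rule ins_ok; intro ballI impI)
      fix b z assume b: "b \<in> J" and z: "z \<in> P" and bt: "fst x < fst z \<and> fst z < fst b"
      have bP: "b \<in> P" using b JP by auto
      have "b \<in> R" using Jhi[OF bP] b bt by auto
      then show "z \<in> J" using Rd bt 2 by auto
    next
      fix b z assume b: "b \<in> J" and z: "z \<in> P" and bt: "fst b < fst z \<and> fst z < fst x"
      have "b \<in> I" using Jlo[of b] b bt by auto
      then have "z \<in> I" using mid Ilev z bt 2 by force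
      then show "z \<in> J" using Jlo[of z] bt by auto
    qed
    ultimately show ?thesis by simp
  next
    case 3
    then show ?thesis using mid xP xI by auto
  next
    case 4
    have "x \<in> R" using 4 Rd xI xP lohi by auto
    moreover have "interval_closed P osum_le (insert x J)"
    proof (rule ins_ok; intro ballI impI)
      fix b z assume b: "b \<in> J" and z: "z \<in> P" and bt: "fst x < fst z \<and> fst z < fst b"
      have bP: "b \<in> P" using b JP by auto
      have "b \<in> R" using Jhi[OF bP] b bt by auto
      then have "z \<in> R" using Rd bt 4 z by auto
      then show "z \<in> J" using Jhi[OF z] bt by auto
    next
      fix b z assume b: "b \<in> J" and z: "z \<in> P" and bt: "fst b < fst z \<and> fst z < fst x"
      have "b \<in> I" using Jlo[of b] b bt by auto
      then show "z \<in> J" using Ilev bt 4 by force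
    qed
    ultimately show ?thesis by simp
  next
    case 5
    have "x \<notin> R" using 5 Rd by auto
    moreover
    obtain w where w: "w \<in> R" "fst w = lo + 1"
    proof (cases "lo + 1 < hi")
      case True
      have "(lo+1, 0) \<in> P" using apos hin True unfolding osum_carrier_def by auto
      then show ?thesis using that[of "(lo+1,0)"] Rd True by auto
    next
      case False
      then have "hi = lo + 1" using lohi by auto
      then show ?thesis using that[of zB] zB Rd lohi by auto
    qed
    have "\<not> interval_closed P osum_le (insert x J)"
    proof (rule ins_bad[of w y0])
      have wP: "w \<in> P" using w Rd by auto
      show "w \<in> J" using Jhi[OF wP] w 5 by auto
      have y0P: "y0 \<in> P" using y0 IP by auto
      show "y0 \<notin> J" using Jhi[OF y0P] y0 5 Rd by auto
      show "y0 \<in> P" by fact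
    qed (use w y0 5 in auto)
    ultimately show ?thesis by simp
  qed
next
  assume xI: "x \<in> I"
  consider "fst x = hi" | "lo < fst x \<and> fst x < hi" | "fst x = lo"
    using Ilev xI lohi by force
  then show "interval_closed P osum_le (J - {x}) \<longleftrightarrow> x \<notin> R"
  proof cases
    case 1
    have "\<not>(\<exists>c\<in>J. \<exists>b\<in>J. fst c < fst x \<and> fst x < fst b)"
    proof
      assume "\<exists>c\<in>J. \<exists>b\<in>J. fst c < fst x \<and> fst x < fst b"
      then obtain b where b: "b \<in> J" "fst x < fst b" by blast
      have bP: "b \<in> P" using b JP by auto
      have "b \<in> R" using Jhi[OF bP] b by auto
      then show False using Rd b 1 by auto
    qed
    then show ?thesis using rem xI Rd 1 lohi by auto
  next
    case 2
    have "y0 \<in> J" using Jlo[of y0] y0 2 by auto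
    moreover have "zB \<in> J" using Jhi[OF zB(1)] zB 2 Rd lohi by auto
    ultimately have "\<exists>c\<in>J. \<exists>b\<in>J. fst c < fst x \<and> fst x < fst b"
      using y0 zB 2 by auto
    then show ?thesis using rem xI Rd 2 xP by auto
  next
    case 3
    have "\<not>(\<exists>c\<in>J. \<exists>b\<in>J. fst c < fst x \<and> fst x < fst b)"
    proof
      assume "\<exists>c\<in>J. \<exists>b\<in>J. fst c < fst x \<and> fst x < fst b"
      then obtain c where c: "c \<in> J" "fst c < fst x" by blast
      have "c \<in> I" using Jlo[of c] c by auto
      then show False using Ilev c 3 by force
    qed
    then show ?thesis using rem xI Rd 3 lohi by auto
  qed
qed

end



context step begin

lemma caseC:
  assumes Ilev: "\<forall>y\<in>I. lo \<le> fst y \<and> fst y \<le> hi"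
    and y0: "y0 \<in> I" "fst y0 = lo"
    and mid: "\<forall>z\<in>P. lo < fst z \<and> fst z \<le> hi \<longrightarrow> z \<in> I"
    and hin: "hi + 1 < n" and apos: "\<forall>i<n. 0 < a i"
    and Rd: "R = {z\<in>P. lo \<le> fst z \<and> fst z \<le> hi + 1 \<and> (fst z = lo \<longrightarrow> z \<notin> I)}"
  shows "(x \<notin> I \<longrightarrow> (interval_closed P osum_le (insert x J) \<longleftrightarrow> x \<in> R)) \<and>
         (x \<in> I \<longrightarrow> (interval_closed P osum_le (J - {x}) \<longleftrightarrow> x \<notin> R))"
proof -
  have lohi: "lo \<le> hi" using Ilev y0 by auto
  have hP: "(hi+1, 0) \<in> P" using apos hin unfolding osum_carrier_def by auto
  have hR: "(hi+1, 0) \<in> R" using hP Rd lohi by auto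
  show ?thesis
  proof (intro conjI impI)
  assume xI: "x \<notin> I"
  consider "hi + 1 < fst x" | "fst x = hi + 1" | "lo < fst x \<and> fst x \<le> hi" | "fst x = lo" | "fst x < lo"
    by linarith
  then show "interval_closed P osum_le (insert x J) \<longleftrightarrow> x \<in> R"
  proof cases
    case 1
    have "x \<notin> R" using 1 Rd by auto
    moreover have "\<not> interval_closed P osum_le (insert x J)"
    proof (rule ins_bad[of y0 "(hi+1,0)"])
      show "y0 \<in> J" using Jlo[of y0] y0 1 lohi by auto
      show "(hi+1,0) \<notin> J" using Jlo[of "(hi+1,0)"] Ilev 1 by force
    qed (use hP y0 1 lohi in auto)
    ultimately show ?thesis by simp
  next
    case 2
    have "x \<in> R" using 2 Rd xI xP lohi by auto
    moreover have "interval_closed P osum_le (insert x J)"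
    proof (rule ins_ok; intro ballI impI)
      fix b z assume b: "b \<in> J" and z: "z \<in> P" and bt: "fst x < fst z \<and> fst z < fst b"
      have bP: "b \<in> P" using b JP by auto
      have "b \<in> R" using Jhi[OF bP] b bt by auto
      then show "z \<in> J" using Rd bt 2 by auto
    next
      fix b z assume b: "b \<in> J" and z: "z \<in> P" and bt: "fst b < fst z \<and> fst z < fst x"
      have "b \<in> I" using Jlo[of b] b bt by auto
      then have "z \<in> I" using mid Ilev z bt 2 by force
      then show "z \<in> J" using Jlo[of z] bt by auto
    qed
    ultimately show ?thesis by simp
  next
    case 3
    then show ?thesis using mid xP xI by auto
  next
    case 4
    have "x \<in> R" using 4 Rd xI xP lohi by auto
    moreover have "interval_closed P osum_le (insert x J)"
    proof (rule ins_ok; intro ballI impI)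
      fix b z assume b: "b \<in> J" and z: "z \<in> P" and bt: "fst x < fst z \<and> fst z < fst b"
      have bP: "b \<in> P" using b JP by auto
      have "b \<in> R" using Jhi[OF bP] b bt by auto
      then have "z \<in> R" using Rd bt 4 z by auto
      then show "z \<in> J" using Jhi[OF z] bt by auto
    next
      fix b z assume b: "b \<in> J" and z: "z \<in> P" and bt: "fst b < fst z \<and> fst z < fst x"
      have "b \<in> I" using Jlo[of b] b bt by auto
      then show "z \<in> J" using Ilev bt 4 by force
    qed
    ultimately show ?thesis by simp
  next
    case 5
    have "x \<notin> R" using 5 Rd by auto
    moreover have l1P: "(lo+1, 0) \<in> P" using apos hin lohi unfolding osum_carrier_def by auto
    moreover have "\<not> interval_closed P osum_le (insert x J)"
    proof (rule ins_bad[of "(lo+1,0)" y0])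
      show "(lo+1,0) \<in> J" using Jhi[OF l1P] l1P Rd lohi 5 by auto
      have y0P: "y0 \<in> P" using y0 IP by auto
      show "y0 \<notin> J" using Jhi[OF y0P] y0 5 Rd by auto
      show "y0 \<in> P" by fact
    qed (use y0 5 in auto)
    ultimately show ?thesis by simp
  qed
next
  assume xI: "x \<in> I"
  consider "lo < fst x \<and> fst x \<le> hi" | "fst x = lo"
    using Ilev xI by force
  then show "interval_closed P osum_le (J - {x}) \<longleftrightarrow> x \<notin> R"
  proof cases
    case 1
    have "y0 \<in> J" using Jlo[of y0] y0 1 by auto
    moreover have "(hi+1,0) \<in> J" using Jhi[OF hP] hR 1 by auto
    ultimately have "\<exists>c\<in>J. \<exists>b\<in>J. fst c < fst x \<and> fst x < fst b"
      using y0 1 by force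
    then show ?thesis using rem xI Rd 1 xP by auto
  next
    case 2
    have "\<not>(\<exists>c\<in>J. \<exists>b\<in>J. fst c < fst x \<and> fst x < fst b)"
    proof
      assume "\<exists>c\<in>J. \<exists>b\<in>J. fst c < fst x \<and> fst x < fst b"
      then obtain c where c: "c \<in> J" "fst c < fst x" by blast
      have "c \<in> I" using Jlo[of c] c by auto
      then show False using Ilev c 2 by force
    qed
    then show ?thesis using rem xI Rd 2 by auto
  qed
qed
qed

end



lemma linext_split:
  assumes L: "linear_extension P osum_le xs" and xs: "xs = us @ x # vs"
  shows "x \<notin> set vs" "set vs \<subseteq> P" "x \<in> P" "\<forall>y\<in>P. fst x < fst y \<longrightarrow> y \<in> set vs"
    "\<forall>y\<in>set vs. fst x \<le> fst y"
proof -
  have d: "distinct xs" and s: "set xs = P"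
    and o: "\<forall>i<length xs. \<forall>j<length xs. osum_le (xs ! i) (xs ! j) \<longrightarrow> i \<le> j"
    using L unfolding linear_extension_def by auto
  show "x \<notin> set vs" using d xs by auto
  show "set vs \<subseteq> P" using s xs by auto
  show "x \<in> P" using s xs by auto
  have xi: "xs ! length us = x" and li: "length us < length xs" using xs by auto
  show "\<forall>y\<in>P. fst x < fst y \<longrightarrow> y \<in> set vs"
  proof (intro ballI impI)
    fix y assume yP: "y \<in> P" and f: "fst x < fst y"
    obtain j where j: "j < length xs" "xs ! j = y" using yP s by (metis in_set_conv_nth)
    have "osum_le (xs ! length us) (xs ! j)" using xi j f unfolding osum_le_def by auto
    then have "length us \<le> j" using o li j by blast
    moreover have "j \<noteq> length us" using xi j f by auto
    ultimately have lt: "length us < j" by simp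
    have "xs ! j = vs ! (j - Suc (length us))" using xs lt by (simp add: nth_append nth_Cons')
    moreover have "j - Suc (length us) < length vs" using j xs lt by auto
    ultimately show "y \<in> set vs" using j by auto
  qed
  show "\<forall>y\<in>set vs. fst x \<le> fst y"
  proof (rule ballI, rule ccontr)
    fix y assume y: "y \<in> set vs" and f: "\<not> fst x \<le> fst y"
    obtain k where k: "k < length vs" "vs ! k = y" using y by (metis in_set_conv_nth)
    have e: "xs ! (Suc (length us + k)) = y" using xs k by (simp add: nth_append)
    have l2: "Suc (length us + k) < length xs" using xs k by simp
    have "osum_le (xs ! Suc (length us + k)) (xs ! length us)" using e xi f unfolding osum_le_def by auto
    then have "Suc (length us + k) \<le> length us" using o l2 li by blast
    then show False by simp
  qed
qed

lemma rowmotion_eq: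
  assumes IC: "interval_closed (osum_carrier a n) osum_le I"
    and L: "linear_extension (osum_carrier a n) osum_le xs"
    and RP: "R \<subseteq> osum_carrier a n"
    and H: "\<And>U x. step a n I R U x \<Longrightarrow>
       (x \<notin> I \<longrightarrow> (interval_closed (osum_carrier a n) osum_le (insert x (R \<inter> U \<union> (I - U))) \<longleftrightarrow> x \<in> R)) \<and>
       (x \<in> I \<longrightarrow> (interval_closed (osum_carrier a n) osum_le ((R \<inter> U \<union> (I - U)) - {x}) \<longleftrightarrow> x \<notin> R))"
  shows "rowmotion (osum_carrier a n) osum_le xs I = R"
proof -
  have IP: "I \<subseteq> osum_carrier a n" using IC unfolding interval_closed_def by auto
  have s: "set xs = osum_carrier a n" using L unfolding linear_extension_def by auto
  have "foldr (toggle (osum_carrier a n) osum_le) xs I = R \<inter> set xs \<union> (I - set xs)"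
  proof (rule foldr_char[OF IC])
    fix us x vs assume xs: "xs = us @ x # vs"
      and ICJ: "interval_closed (osum_carrier a n) osum_le (R \<inter> set vs \<union> (I - set vs))"
    note sp = linext_split[OF L xs]
    have st: "step a n I R (set vs) x"
      by (unfold_locales) (use sp ICJ IP RP in auto)
    show "toggle (osum_carrier a n) osum_le x (R \<inter> set vs \<union> (I - set vs)) = R \<inter> set (x # vs) \<union> (I - set (x # vs))"
      using toggle_eq[of x "set vs" I "osum_carrier a n" osum_le R] H[OF st] sp(1) by simp
  qed
  then show ?thesis unfolding rowmotion_def using s RP IP by auto
qed




lemma minI_lem:
  assumes "y0 \<in> I" "fst y0 = lo" "\<forall>y\<in>I. lo \<le> fst y"
  shows "minimal_elts osum_le I = {y\<in>I. fst y = lo}"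
proof (rule set_eqI, rule iffI)
  fix w assume "w \<in> minimal_elts osum_le I"
  then have w: "w \<in> I" "\<forall>y\<in>I. osum_le y w \<longrightarrow> y = w" unfolding minimal_elts_def by auto
  have "fst w = lo"
  proof (rule ccontr)
    assume "fst w \<noteq> lo"
    then have "lo < fst w" using w assms(3) by force
    then have "osum_le y0 w" using assms(2) unfolding osum_le_def by auto
    then have "y0 = w" using w assms(1) by blast
    then show False using \<open>lo < fst w\<close> assms(2) by simp
  qed
  then show "w \<in> {y\<in>I. fst y = lo}" using w by simp
next
  fix w assume "w \<in> {y\<in>I. fst y = lo}"
  then have w: "w \<in> I" "fst w = lo" by auto
  have "\<forall>y\<in>I. osum_le y w \<longrightarrow> y = w"
  proof (intro ballI impI)
    fix y assume "y \<in> I" "osum_le y w"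
    then show "y = w" using assms(3) w unfolding osum_le_def by force
  qed
  then show "w \<in> minimal_elts osum_le I" using w unfolding minimal_elts_def by simp
qed

lemma upI_lem:
  assumes "I \<subseteq> P" "y0 \<in> I" "fst y0 = lo" "\<forall>y\<in>I. lo \<le> fst y"
  shows "up_closure P osum_le I - I = {z\<in>P. lo < fst z \<and> z \<notin> I}"
proof (rule set_eqI, rule iffI)
  fix z assume "z \<in> up_closure P osum_le I - I"
  then obtain w where "z \<in> P" "z \<notin> I" "w \<in> I" "osum_le w z" unfolding up_closure_def by auto
  moreover then have "fst w < fst z" unfolding osum_le_def by auto
  moreover have "lo \<le> fst w" using assms(4) \<open>w \<in> I\<close> by auto
  ultimately show "z \<in> {z\<in>P. lo < fst z \<and> z \<notin> I}" by auto
next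
  fix z assume z: "z \<in> {z\<in>P. lo < fst z \<and> z \<notin> I}"
  then have "osum_le y0 z" using assms(3) unfolding osum_le_def by auto
  then show "z \<in> up_closure P osum_le I - I" using z assms(2) unfolding up_closure_def by auto
qed

lemma ceilB_lem:
  assumes zB: "zB \<in> P" "fst zB = hi" "zB \<notin> I" and lohi: "lo < hi"
    and mid: "\<forall>z\<in>P. lo < fst z \<and> fst z < hi \<longrightarrow> z \<in> I"
  shows "minimal_elts osum_le {z\<in>P. lo < fst z \<and> z \<notin> I} = {z\<in>P. fst z = hi \<and> z \<notin> I}"
proof (rule set_eqI, rule iffI)
  fix w assume "w \<in> minimal_elts osum_le {z\<in>P. lo < fst z \<and> z \<notin> I}"
  then have w: "w \<in> P" "lo < fst w" "w \<notin> I"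
    and m: "\<forall>y\<in>{z\<in>P. lo < fst z \<and> z \<notin> I}. osum_le y w \<longrightarrow> y = w"
    unfolding minimal_elts_def by auto
  have "fst w = hi"
  proof (rule ccontr)
    assume "fst w \<noteq> hi"
    moreover have "\<not> fst w < hi" using mid w by auto
    ultimately have "hi < fst w" by simp
    then have "osum_le zB w" using zB unfolding osum_le_def by auto
    moreover have "zB \<in> {z\<in>P. lo < fst z \<and> z \<notin> I}" using zB lohi by auto
    ultimately have "zB = w" using m by blast
    then show False using \<open>hi < fst w\<close> zB by simp
  qed
  then show "w \<in> {z\<in>P. fst z = hi \<and> z \<notin> I}" using w by simp
next
  fix w assume "w \<in> {z\<in>P. fst z = hi \<and> z \<notin> I}"
  then have w: "w \<in> P" "fst w = hi" "w \<notin> I" by auto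
  have "\<forall>y\<in>{z\<in>P. lo < fst z \<and> z \<notin> I}. osum_le y w \<longrightarrow> y = w"
  proof (intro ballI impI)
    fix y assume y: "y \<in> {z\<in>P. lo < fst z \<and> z \<notin> I}" and "osum_le y w"
    then have "y = w \<or> fst y < hi" using w unfolding osum_le_def by auto
    then show "y = w" using mid y by auto
  qed
  then show "w \<in> minimal_elts osum_le {z\<in>P. lo < fst z \<and> z \<notin> I}"
    using w lohi unfolding minimal_elts_def by auto
qed

lemma ceilC_lem:
  assumes hP: "(Suc hi, 0) \<in> P" and lohi: "lo \<le> hi"
    and Ilev: "\<forall>y\<in>I. fst y \<le> hi"
    and mid: "\<forall>z\<in>P. lo < fst z \<and> fst z \<le> hi \<longrightarrow> z \<in> I"
  shows "minimal_elts osum_le {z\<in>P. lo < fst z \<and> z \<notin> I} = {z\<in>P. fst z = Suc hi}"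
proof (rule set_eqI, rule iffI)
  fix w assume "w \<in> minimal_elts osum_le {z\<in>P. lo < fst z \<and> z \<notin> I}"
  then have w: "w \<in> P" "lo < fst w" "w \<notin> I"
    and m: "\<forall>y\<in>{z\<in>P. lo < fst z \<and> z \<notin> I}. osum_le y w \<longrightarrow> y = w"
    unfolding minimal_elts_def by auto
  have "fst w = Suc hi"
  proof (rule ccontr)
    assume "fst w \<noteq> Suc hi"
    moreover have "\<not> fst w \<le> hi" using mid w by auto
    ultimately have "Suc hi < fst w" by simp
    then have "osum_le (Suc hi, 0) w" unfolding osum_le_def by auto
    moreover have "(Suc hi, 0) \<in> {z\<in>P. lo < fst z \<and> z \<notin> I}" using hP lohi Ilev by force
    ultimately have "(Suc hi, 0) = w" using m by blast
    then show False using \<open>Suc hi < fst w\<close> by auto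
  qed
  then show "w \<in> {z\<in>P. fst z = Suc hi}" using w by simp
next
  fix w assume "w \<in> {z\<in>P. fst z = Suc hi}"
  then have w: "w \<in> P" "fst w = Suc hi" by auto
  have wI: "w \<notin> I" using Ilev w by force
  have "\<forall>y\<in>{z\<in>P. lo < fst z \<and> z \<notin> I}. osum_le y w \<longrightarrow> y = w"
  proof (intro ballI impI)
    fix y assume y: "y \<in> {z\<in>P. lo < fst z \<and> z \<notin> I}" and "osum_le y w"
    then have "y = w \<or> fst y \<le> hi" using w unfolding osum_le_def by auto
    then show "y = w" using mid y by auto
  qed
  then show "w \<in> minimal_elts osum_le {z\<in>P. lo < fst z \<and> z \<notin> I}"
    using w wI lohi unfolding minimal_elts_def by auto
qed

lemma dceilC_lem:
  assumes hP: "(Suc hi, 0) \<in> P"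
  shows "down_closure P osum_le {z\<in>P. fst z = Suc hi} = {z\<in>P. fst z \<le> Suc hi}"
proof (rule set_eqI, rule iffI)
  fix z assume "z \<in> down_closure P osum_le {z\<in>P. fst z = Suc hi}"
  then show "z \<in> {z\<in>P. fst z \<le> Suc hi}" unfolding down_closure_def osum_le_def by auto
next
  fix z assume z: "z \<in> {z\<in>P. fst z \<le> Suc hi}"
  show "z \<in> down_closure P osum_le {z\<in>P. fst z = Suc hi}"
  proof (cases "fst z = Suc hi")
    case True
    have "z \<in> {z\<in>P. fst z = Suc hi}" "osum_le z z" using True z unfolding osum_le_def by auto
    then show ?thesis using z unfolding down_closure_def by blast
  next
    case False
    then have "osum_le z (Suc hi, 0)" using z unfolding osum_le_def by auto
    then show ?thesis using z hP unfolding down_closure_def by auto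
  qed
qed




lemma finite_osum: "finite (osum_carrier a n)"
proof -
  have "osum_carrier a n \<subseteq> (SIGMA i:{..<n}. {..<a i})" unfolding osum_carrier_def by auto
  then show ?thesis by (rule finite_subset) auto
qed

theorem theorem3p12:
  fixes a :: "nat \<Rightarrow> nat" and n :: nat and I :: "(nat \<times> nat) set"
    and xs :: "(nat \<times> nat) list"
  assumes "n \<ge> 1"
    and "\<forall>i<n. 0 < a i"
    and "interval_closed (osum_carrier a n) osum_le I"
    and "linear_extension (osum_carrier a n) osum_le xs"
  shows "rowmotion (osum_carrier a n) osum_le xs I =
    (if I = {} \<or> osum_top a n \<subseteq> I \<or> I \<subseteq> osum_top a n
     then osum_carrier a n - I
     else down_closure (osum_carrier a n) osum_le (ceiling_ic (osum_carrier a n) osum_le I)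
          - down_closure (osum_carrier a n) osum_le (minimal_elts osum_le I))"
proof -
  define P where "P = osum_carrier a n"
  note n1 = assms(1) and apos = assms(2) and IC = assms(3) and L = assms(4)
  have IP: "I \<subseteq> P" using IC unfolding interval_closed_def P_def by auto
  have ICc: "\<forall>x\<in>I. \<forall>y\<in>I. \<forall>z\<in>P. fst x < fst z \<and> fst z < fst y \<longrightarrow> z \<in> I"
    using IC unfolding ic_char P_def by blast
  have Pfst: "\<And>z. z \<in> P \<Longrightarrow> fst z < n" unfolding P_def osum_carrier_def by auto
  have Pin: "\<And>i. i < n \<Longrightarrow> (i, 0) \<in> P" using apos unfolding P_def osum_carrier_def by auto
  have top: "osum_top a n = {z\<in>P. fst z = n - 1}"
    using n1 unfolding osum_top_def P_def osum_carrier_def by auto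
  show ?thesis
  proof (cases "I = {} \<or> osum_top a n \<subseteq> I \<or> I \<subseteq> osum_top a n")
    case True
    have up: "\<forall>y\<in>I. \<forall>z\<in>P. fst y < fst z \<longrightarrow> z \<in> I"
    proof (intro ballI impI)
      fix y z assume y: "y \<in> I" and z: "z \<in> P" and f: "fst y < fst z"
      consider "I = {}" | "osum_top a n \<subseteq> I" | "I \<subseteq> osum_top a n" using True by blast
      then show "z \<in> I"
      proof cases
        case 1 then show ?thesis using y by simp
      next
        case 2
        show ?thesis
        proof (cases "fst z = n - 1")
          case True then show ?thesis using 2 top z by auto
        next
          case False
          then have "fst z < n - 1" using Pfst[OF z] by simp
          moreover have "(n-1, 0) \<in> I" using 2 top Pin n1 by auto
          ultimately show ?thesis using ICc[rule_format, OF y _ z, of "(n-1,0)"] f by simp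
        qed
      next
        case 3
        then have "fst y = n - 1" using y top by auto
        then show ?thesis using Pfst[OF z] f by simp
      qed
    qed
    have "rowmotion (osum_carrier a n) osum_le xs I = P - I"
    proof (rule rowmotion_eq[OF IC L])
      show "P - I \<subseteq> osum_carrier a n" unfolding P_def by auto
      fix U x assume st: "step a n I (P - I) U x"
      show "(x \<notin> I \<longrightarrow> (interval_closed (osum_carrier a n) osum_le (insert x ((P - I) \<inter> U \<union> (I - U))) \<longleftrightarrow> x \<in> P - I)) \<and>
       (x \<in> I \<longrightarrow> (interval_closed (osum_carrier a n) osum_le (((P - I) \<inter> U \<union> (I - U)) - {x}) \<longleftrightarrow> x \<notin> P - I))"
        using step.up_case[OF st up[unfolded P_def]] unfolding P_def by simp
    qed
    then show ?thesis using True P_def by simp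
  next
    case False
    then have Ine: "I \<noteq> {}" and ntop: "\<not> osum_top a n \<subseteq> I" and nsub: "\<not> I \<subseteq> osum_top a n" by auto
    have fI: "finite I" using IP finite_osum finite_subset unfolding P_def by blast
    define lo where "lo = Min (fst ` I)"
    define hi where "hi = Max (fst ` I)"
    have "lo \<in> fst ` I" using Min_in[of "fst ` I"] fI Ine unfolding lo_def by auto
    then obtain y0 where y0: "y0 \<in> I" "fst y0 = lo" by auto
    have y0': "(lo, snd y0) \<in> I" using y0 by (metis prod.collapse)
    have "hi \<in> fst ` I" using Max_in[of "fst ` I"] fI Ine unfolding hi_def by auto
    then obtain y1 where y1: "y1 \<in> I" "fst y1 = hi" by auto
    have Ilev: "\<forall>y\<in>I. lo \<le> fst y \<and> fst y \<le> hi" using fI unfolding lo_def hi_def by auto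
    have "y1 \<in> P" using y1 IP by auto
    then have hin: "hi < n" using Pfst y1(2) by blast
    have mid: "\<forall>z\<in>P. lo < fst z \<and> fst z < hi \<longrightarrow> z \<in> I" using ICc y0 y1 by metis
    have minI: "minimal_elts osum_le I = {y\<in>I. fst y = lo}"
      using minI_lem[OF y0] Ilev by blast
    have dmin: "down_closure P osum_le (minimal_elts osum_le I) = {z\<in>P. fst z < lo \<or> (z \<in> I \<and> fst z = lo)}"
      unfolding minI down_closure_def osum_le_def using y0 y0' IP by auto
    have upI: "up_closure P osum_le I - I = {z\<in>P. lo < fst z \<and> z \<notin> I}"
      using upI_lem[OF IP y0] Ilev by blast
    show ?thesis
    proof (cases "lo < hi \<and> (\<exists>zB\<in>P. fst zB = hi \<and> zB \<notin> I)")
      case True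
      then obtain zB where zB: "zB \<in> P" "fst zB = hi" "zB \<notin> I" and lohi: "lo < hi" by blast
      have zB': "(hi, snd zB) \<in> P" "(hi, snd zB) \<notin> I" using zB by (metis prod.collapse)+
      define R where "R = {z\<in>P. lo \<le> fst z \<and> fst z \<le> hi \<and> (z \<in> I \<longrightarrow> lo < fst z \<and> fst z < hi)}"
      have ceil: "ceiling_ic P osum_le I = {z\<in>P. fst z = hi \<and> z \<notin> I}"
        unfolding ceiling_ic_def upI using ceilB_lem[OF zB lohi mid] .
      have dceil: "down_closure P osum_le (ceiling_ic P osum_le I) = {z\<in>P. fst z < hi \<or> (fst z = hi \<and> z \<notin> I)}"
        unfolding ceil down_closure_def osum_le_def using zB zB' by auto
      have rhs: "down_closure P osum_le (ceiling_ic P osum_le I) - down_closure P osum_le (minimal_elts osum_le I) = R"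
        unfolding dceil dmin R_def using lohi by auto
      have "rowmotion (osum_carrier a n) osum_le xs I = R"
      proof (rule rowmotion_eq[OF IC L])
        show "R \<subseteq> osum_carrier a n" unfolding P_def R_def by auto
        fix U x assume st: "step a n I R U x"
        show "(x \<notin> I \<longrightarrow> (interval_closed (osum_carrier a n) osum_le (insert x (R \<inter> U \<union> (I - U))) \<longleftrightarrow> x \<in> R)) \<and>
         (x \<in> I \<longrightarrow> (interval_closed (osum_carrier a n) osum_le ((R \<inter> U \<union> (I - U)) - {x}) \<longleftrightarrow> x \<notin> R))"
          using step.caseB[OF st Ilev y0 mid[unfolded P_def] zB[unfolded P_def] lohi hin apos R_def[unfolded P_def]] by (simp add: P_def)
      qed
      then show ?thesis using False rhs P_def by simp
    next
      case nB: False
      define R where "R = {z\<in>P. lo \<le> fst z \<and> fst z \<le> hi + 1 \<and> (fst z = lo \<longrightarrow> z \<notin> I)}"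
      have midC: "\<forall>z\<in>P. lo < fst z \<and> fst z \<le> hi \<longrightarrow> z \<in> I"
      proof (intro ballI impI)
        fix z assume z: "z \<in> P" and f: "lo < fst z \<and> fst z \<le> hi"
        show "z \<in> I"
        proof (cases "fst z < hi")
          case True then show ?thesis using mid z f by auto
        next
          case False then show ?thesis using nB z f by auto
        qed
      qed
      have hin1: "hi + 1 < n"
      proof (rule ccontr)
        assume "\<not> hi + 1 < n"
        then have hn: "hi = n - 1" using hin by auto
        show False
        proof (cases "lo = hi")
          case True
          then have "I \<subseteq> osum_top a n" using Ilev IP top hn by auto
          then show False using nsub by simp
        next
          case False
          then have "lo < hi" using Ilev y0 by auto
          then have "osum_top a n \<subseteq> I" using midC top hn by auto
          then show False using ntop by simp
        qed
      qed
      have hP: "(hi+1, 0) \<in> P" using Pin hin1 by auto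
      have ceil: "ceiling_ic P osum_le I = {z\<in>P. fst z = hi + 1}"
      proof -
        have lohi': "lo \<le> hi" using Ilev y0 by auto
        have Ilev': "\<forall>y\<in>I. fst y \<le> hi" using Ilev by auto
        have hP': "(Suc hi, 0) \<in> P" using hP by simp
        show ?thesis unfolding ceiling_ic_def upI using ceilC_lem[OF hP' lohi' Ilev' midC] by simp
      qed
      have dceil: "down_closure P osum_le (ceiling_ic P osum_le I) = {z\<in>P. fst z \<le> hi + 1}"
        unfolding ceil using dceilC_lem[of hi P] hP by simp
      have rhs: "down_closure P osum_le (ceiling_ic P osum_le I) - down_closure P osum_le (minimal_elts osum_le I) = R"
        unfolding dceil dmin R_def by auto
      have "rowmotion (osum_carrier a n) osum_le xs I = R"
      proof (rule rowmotion_eq[OF IC L])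
        show "R \<subseteq> osum_carrier a n" unfolding P_def R_def by auto
        fix U x assume st: "step a n I R U x"
        show "(x \<notin> I \<longrightarrow> (interval_closed (osum_carrier a n) osum_le (insert x (R \<inter> U \<union> (I - U))) \<longleftrightarrow> x \<in> R)) \<and>
         (x \<in> I \<longrightarrow> (interval_closed (osum_carrier a n) osum_le ((R \<inter> U \<union> (I - U)) - {x}) \<longleftrightarrow> x \<notin> R))"
          using step.caseC[OF st Ilev y0 midC[unfolded P_def] hin1 apos R_def[unfolded P_def]] by (simp add: P_def)
      qed
      then show ?thesis using False rhs P_def by simp
    qed
  qed
qed



end
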